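(* For every $m\geqslant1$ and $n\geqslant1$, $$\mathcal{F}_m(n)=\prod_{p^\alpha\| n}\left(f_{m-1}(\alpha)-f_{m-1}(\alpha-1)\right),$$ $|\mathcal{F}_m(n)|\leqslant1$, and if $\mathcal{F}_m(n)\neq0$ then every prime $p$ dividing $n$ divides $n$ to exponent at least $2\uparrow\uparrow m$.
   Context: $H(n)$ is the height of the factorization tree of $n\geqslant1$: $H(1)=0$ and, for $n=p_1^{\alpha_1}\cdots p_k^{\alpha_k}>1$ with distinct primes $p_i$, $H(n)=1+\max_i H(\alpha_i)$. For $m\geqslant0$ and $n\geqslant1$, $f_m(n)=1$ if $H(n)\leqslant m$ and $0$ otherwise; in addition, by convention $f_m(0)=1$ for all $m\geqslant 0$ (so $f_0(\alpha)=1$ iff $\alpha\in\{0,1\}$). $\mathcal{F}_m$ is defined by $f_m(n)=\sum_{d\mid n}\mathcal{F}_m(d)$ for all $n\geqslant1$. Tetration: $a\uparrow\uparrow0=1$, $a\uparrow\uparrow b=a^{a\uparrow\uparrow(b-1)}$. The product is over prime powers exactly dividing $n$ (empty product $=1$). *)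

theory Defs
  imports "HOL-Computational_Algebra.Primes"
begin

lemma multiplicity_lt_self:
  assumes "p \<in> prime_factors n" "n > 1"
  shows "multiplicity p n < n"
proof -
  have p: "prime p" using assms(1) by auto
  have "p ^ multiplicity p n dvd n" by (rule multiplicity_dvd)
  hence "p ^ multiplicity p n \<le> n" using assms(2) by (intro dvd_imp_le) auto
  moreover have "multiplicity p n < 2 ^ multiplicity p n" by (rule less_exp)
  moreover have "2 ^ multiplicity p n \<le> p ^ multiplicity p n"
    using prime_ge_2_nat[OF p] by (intro power_mono) auto
  ultimately show ?thesis by linarith
qed

text \<open>Height of the factorization tree: H(1) = 0, H(n) = 1 + max_i H(alpha_i).
  The value at 0 is irrelevant (set to 0).\<close>
function H :: "nat \<Rightarrow> nat" where
  "H n = (if n \<le> 1 then 0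
          else 1 + Max ((\<lambda>p. H (multiplicity p n)) ` prime_factors n))"
  by auto
termination
  by (relation "measure id") (auto intro: multiplicity_lt_self)

declare H.simps[simp del]

definition fm :: "nat \<Rightarrow> nat \<Rightarrow> int" where
  "fm m n = (if n = 0 then 1 else if H n \<le> m then 1 else 0)"

text \<open>F_m is the unique function with f_m(n) = sum over d | n of F_m(d), n >= 1;
  written as the recursion solving that identity for F_m(n).\<close>
function Fm :: "nat \<Rightarrow> nat \<Rightarrow> int" where
  "Fm m n = (if n = 0 then 0
             else fm m n - (\<Sum>d\<in>{d. d dvd n \<and> d < n}. Fm m d))"
  by auto
termination
  by (relation "measure (\<lambda>(m, n). n)") auto

declare Fm.simps[simp del]

lemma Fm_defining_identity:
  assumes "n \<ge> 1"
  shows "fm m n = (\<Sum>d | d dvd n. Fm m d)"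
proof -
  have fin: "finite {d. d dvd n \<and> d < n}" by (rule finite_subset[of _ "{..<n}"]) auto
  have eq: "{d. d dvd n} = insert n {d. d dvd n \<and> d < n}"
    using assms by (auto dest: dvd_imp_le)
  have "(\<Sum>d | d dvd n. Fm m d) = Fm m n + (\<Sum>d\<in>{d. d dvd n \<and> d < n}. Fm m d)"
    unfolding eq using fin by (subst sum.insert) auto
  also have "\<dots> = fm m n" using assms by (subst Fm.simps[of m n]) simp
  finally show ?thesis by simp
qed

fun tetr :: "nat \<Rightarrow> nat \<Rightarrow> nat" where
  "tetr a 0 = 1"
| "tetr a (Suc b) = a ^ tetr a b"

end

theory Submission
  imports Defs "HOL-Library.FuncSet"
begin

lemma div_bij:
  fixes n :: nat
  assumes n: "n > 0"
  defines "P \<equiv> prime_factors n"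
  shows "bij_betw (\<lambda>e. \<Prod>p\<in>P. p ^ e p) (PiE P (\<lambda>p. {0..multiplicity p n})) {d. d dvd n}"
proof (rule bij_betw_byWitness[where f' = "\<lambda>d. restrict (\<lambda>p. multiplicity p d) P"])
  have finP: "finite P" and prP: "\<And>p. p \<in> P \<Longrightarrow> prime p" unfolding P_def by auto
  have mp: "multiplicity p (\<Prod>q\<in>P. q ^ e q) = (if p \<in> P then e p else 0)" if "prime p" for p e
    using multiplicity_prod_prime_powers[OF finP prP that] by simp
  show "\<forall>e\<in>PiE P (\<lambda>p. {0..multiplicity p n}). restrict (\<lambda>p. multiplicity p (\<Prod>q\<in>P. q ^ e q)) P = e"
  proof
    fix e assume e: "e \<in> PiE P (\<lambda>p. {0..multiplicity p n})"
    show "restrict (\<lambda>p. multiplicity p (\<Prod>q\<in>P. q ^ e q)) P = e"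
    proof
      fix p show "restrict (\<lambda>p. multiplicity p (\<Prod>q\<in>P. q ^ e q)) P p = e p"
        using e mp[of p e] prP[of p] by (auto simp: PiE_def extensional_def)
    qed
  qed
  show "\<forall>d\<in>{d. d dvd n}. (\<Prod>p\<in>P. p ^ restrict (\<lambda>p. multiplicity p d) P p) = d"
  proof
    fix d assume "d \<in> {d. d dvd n}"
    hence d: "d dvd n" by simp
    hence d0: "d > 0" using n by (auto intro: Nat.gr0I)
    have sub: "prime_factors d \<subseteq> P" unfolding P_def using d n
      by (metis dvd_prime_factors less_irrefl)
    have "(\<Prod>p\<in>P. p ^ restrict (\<lambda>p. multiplicity p d) P p) = (\<Prod>p\<in>P. p ^ multiplicity p d)"
      by (rule prod.cong) auto
    also have "\<dots> = (\<Prod>p\<in>prime_factors d. p ^ multiplicity p d)"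
      by (rule prod.mono_neutral_right[OF finP sub]) (use prP d0 in \<open>auto intro!: not_dvd_imp_multiplicity_0 simp: in_prime_factors_iff\<close>)
    also have "\<dots> = d" using prime_factorization_nat[OF d0] by simp
    finally show "(\<Prod>p\<in>P. p ^ restrict (\<lambda>p. multiplicity p d) P p) = d" .
  qed
  show "(\<lambda>e. \<Prod>p\<in>P. p ^ e p) ` PiE P (\<lambda>p. {0..multiplicity p n}) \<subseteq> {d. d dvd n}"
  proof safe
    fix e assume e: "e \<in> PiE P (\<lambda>p. {0..multiplicity p n})"
    have ne: "(\<Prod>p\<in>P. p ^ e p) \<noteq> 0" using prP by (metis power_not_zero prod_zero_iff finP not_prime_0)
    show "(\<Prod>p\<in>P. p ^ e p) dvd n"
    proof (rule multiplicity_le_imp_dvd[OF ne])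
      fix p :: nat assume "prime p"
      thus "multiplicity p (\<Prod>p\<in>P. p ^ e p) \<le> multiplicity p n"
        using mp[of p e] e by auto
    qed
  qed
  show "(\<lambda>d. restrict (\<lambda>p. multiplicity p d) P) ` {d. d dvd n} \<subseteq> PiE P (\<lambda>p. {0..multiplicity p n})"
    using n by (auto intro!: dvd_imp_multiplicity_le)
qed


lemma divsum:
  fixes n :: nat and psi :: "nat \<Rightarrow> nat \<Rightarrow> int"
  assumes n: "n > 0"
  shows "(\<Sum>d | d dvd n. \<Prod>p\<in>prime_factors n. psi p (multiplicity p d))
       = (\<Prod>p\<in>prime_factors n. \<Sum>k\<in>{0..multiplicity p n}. psi p k)"
proof -
  define P where "P = prime_factors n"
  have finP: "finite P" and prP: "\<And>p. p \<in> P \<Longrightarrow> prime p" unfolding P_def by auto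
  have mp: "multiplicity p (\<Prod>q\<in>P. q ^ e q) = e p" if "p \<in> P" for p e
    using multiplicity_prod_prime_powers[OF finP prP prP[OF that]] that by simp
  have "(\<Prod>p\<in>P. \<Sum>k\<in>{0..multiplicity p n}. psi p k)
      = (\<Sum>e\<in>PiE P (\<lambda>p. {0..multiplicity p n}). \<Prod>p\<in>P. psi p (e p))"
    by (rule prod_sum_PiE[OF finP]) auto
  also have "\<dots> = (\<Sum>e\<in>PiE P (\<lambda>p. {0..multiplicity p n}). \<Prod>p\<in>P. psi p (multiplicity p (\<Prod>q\<in>P. q ^ e q)))"
    by (intro sum.cong prod.cong) (auto simp: mp)
  also have "\<dots> = (\<Sum>d | d dvd n. \<Prod>p\<in>P. psi p (multiplicity p d))"
    using sum.reindex_bij_betw[OF div_bij[OF n], folded P_def,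
       of "\<lambda>d. \<Prod>p\<in>P. psi p (multiplicity p d)"] by simp
  finally show ?thesis unfolding P_def by simp
qed

lemma prod_ind:
  assumes "finite A"
  shows "(\<Prod>p\<in>A. if Q p then (1::int) else 0) = (if \<forall>p\<in>A. Q p then 1 else 0)"
  using assms by (induction A rule: finite_induct) auto

lemma H_small:
  "1 \<le> k \<Longrightarrow> k < tetr 2 (Suc j) \<Longrightarrow> H k \<le> j"
proof (induction j arbitrary: k)
  case 0
  then have "k = 1" by simp
  then show ?case by (simp add: H.simps)
next
  case (Suc j)
  show ?case
  proof (cases "k \<le> 1")
    case True then show ?thesis by (simp add: H.simps)
  next
    case False
    have fin: "finite ((\<lambda>p. H (multiplicity p k)) ` prime_factors k)" by simp
    have le: "x \<le> j" if xin: "x \<in> (\<lambda>p. H (multiplicity p k)) ` prime_factors k" for x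
    proof -
      obtain p where p: "p \<in> prime_factors k" and x: "x = H (multiplicity p k)" using xin by blast
      have pr: "prime p" using p by auto
      have k0: "k \<noteq> 0" using False by simp
      have m1: "multiplicity p k \<ge> 1" using p k0
        by (simp add: prime_factors_multiplicity)
      have "2 ^ multiplicity p k \<le> p ^ multiplicity p k"
        using prime_ge_2_nat[OF pr] by (intro power_mono) auto
      also have "\<dots> \<le> k" using k0 by (intro dvd_imp_le multiplicity_dvd) auto
      also have "\<dots> < 2 ^ tetr 2 (Suc j)" using Suc.prems by simp
      finally have "(2::nat) ^ multiplicity p k < 2 ^ tetr 2 (Suc j)" .
      hence "multiplicity p k < tetr 2 (Suc j)"
        by (rule power_less_imp_less_exp[rotated]) simp
      then show ?thesis using Suc.IH m1 x by simp
    qed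
    have ne: "prime_factors k \<noteq> {}"
    proof
      assume "prime_factors k = {}"
      hence "k = 1" using prime_factorization_nat[of k] False by simp
      thus False using False by simp
    qed
    have "Max ((\<lambda>p. H (multiplicity p k)) ` prime_factors k) \<le> j"
      using fin ne le by (subst Max_le_iff) auto
    then show ?thesis using False by (subst H.simps) simp
  qed
qed

lemma fm_prod:
  assumes m: "m \<ge> 1" and n: "n > 0"
  shows "fm m n = (\<Prod>p\<in>prime_factors n. fm (m - 1) (multiplicity p n))"
proof (cases "n = 1")
  case True then show ?thesis by (simp add: fm_def H.simps)
next
  case False
  have mpos: "\<And>p. p \<in> prime_factors n \<Longrightarrow> multiplicity p n \<noteq> 0"
    using n by (simp add: prime_factors_multiplicity)
  have "(\<Prod>p\<in>prime_factors n. fm (m - 1) (multiplicity p n))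
      = (\<Prod>p\<in>prime_factors n. if H (multiplicity p n) \<le> m - 1 then 1 else 0)"
    by (rule prod.cong) (auto simp: fm_def mpos)
  also have "\<dots> = (if \<forall>p\<in>prime_factors n. H (multiplicity p n) \<le> m - 1 then 1 else 0)"
    by (rule prod_ind) simp
  also have "\<dots> = fm m n"
  proof -
    have fin: "finite ((\<lambda>p. H (multiplicity p n)) ` prime_factors n)" by simp
    have ne: "prime_factors n \<noteq> {}" using False n
      by (metis prime_factorization_nat prod.empty)
    have "H n = 1 + Max ((\<lambda>p. H (multiplicity p n)) ` prime_factors n)"
      using False n by (subst H.simps) simp
    hence "(H n \<le> m) = (Max ((\<lambda>p. H (multiplicity p n)) ` prime_factors n) \<le> m - 1)"
      using m by linarith
    also have "\<dots> = (\<forall>x\<in>(\<lambda>p. H (multiplicity p n)) ` prime_factors n. x \<le> m - 1)"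
      using fin ne by (subst Max_le_iff) auto
    also have "\<dots> = (\<forall>p\<in>prime_factors n. H (multiplicity p n) \<le> m - 1)" by blast
    finally have "(H n \<le> m) = (\<forall>p\<in>prime_factors n. H (multiplicity p n) \<le> m - 1)" .
    thus ?thesis using n by (simp add: fm_def)
  qed
  finally show ?thesis by simp
qed


lemma telescope:
  fixes g :: "nat \<Rightarrow> int"
  assumes "g 0 = 1"
  shows "(\<Sum>k\<in>{0..a}. (if k = 0 then 1 else g k - g (k - 1))) = g a"
  using assms by (induction a) auto

lemma G_ext:
  fixes g :: "nat \<Rightarrow> int" and n d :: nat
  assumes n: "n > 0" and d: "d dvd n"
  shows "(\<Prod>p\<in>prime_factors d. g (multiplicity p d) - g (multiplicity p d - 1))
       = (\<Prod>p\<in>prime_factors n. (if multiplicity p d = 0 then 1 else g (multiplicity p d) - g (multiplicity p d - 1)))"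
proof -
  have d0: "d > 0" using d n by (auto intro: Nat.gr0I)
  have sub: "prime_factors d \<subseteq> prime_factors n" using d n
    by (metis dvd_prime_factors less_irrefl)
  have "(\<Prod>p\<in>prime_factors d. g (multiplicity p d) - g (multiplicity p d - 1))
     = (\<Prod>p\<in>prime_factors d. (if multiplicity p d = 0 then 1 else g (multiplicity p d) - g (multiplicity p d - 1)))"
    using d0 by (intro prod.cong) (auto simp: prime_factors_multiplicity)
  also have "\<dots> = (\<Prod>p\<in>prime_factors n. (if multiplicity p d = 0 then 1 else g (multiplicity p d) - g (multiplicity p d - 1)))"
    by (rule prod.mono_neutral_left[OF _ sub])
       (use d0 in \<open>auto simp: not_dvd_imp_multiplicity_0 in_prime_factors_iff\<close>)
  finally show ?thesis .
qed

lemma G_sum: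
  fixes g :: "nat \<Rightarrow> int" and n :: nat
  assumes n: "n > 0" and g0: "g 0 = 1"
  shows "(\<Sum>d | d dvd n. \<Prod>p\<in>prime_factors d. g (multiplicity p d) - g (multiplicity p d - 1))
       = (\<Prod>p\<in>prime_factors n. g (multiplicity p n))"
proof -
  have "(\<Sum>d | d dvd n. \<Prod>p\<in>prime_factors d. g (multiplicity p d) - g (multiplicity p d - 1))
      = (\<Sum>d | d dvd n. \<Prod>p\<in>prime_factors n. (if multiplicity p d = 0 then 1 else g (multiplicity p d) - g (multiplicity p d - 1)))"
    by (rule sum.cong[OF refl], rule G_ext[OF n]) simp
  also have "\<dots> = (\<Prod>p\<in>prime_factors n. \<Sum>k\<in>{0..multiplicity p n}. (if k = 0 then 1 else g k - g (k - 1)))"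
    by (rule divsum[OF n, where psi = "\<lambda>p k. (if k = 0 then 1 else g k - g (k - 1))"])
  also have "\<dots> = (\<Prod>p\<in>prime_factors n. g (multiplicity p n))"
    using telescope[of g, OF g0] by simp
  finally show ?thesis .
qed

lemma Fm_unique:
  fixes G :: "nat \<Rightarrow> int"
  assumes "\<And>n. n > 0 \<Longrightarrow> (\<Sum>d | d dvd n. G d) = fm m n"
  shows "n > 0 \<Longrightarrow> Fm m n = G n"
proof (induction n rule: less_induct)
  case (less n)
  have fin: "finite {d. d dvd n \<and> d < n}" by (rule finite_subset[of _ "{..<n}"]) auto
  have eq: "{d. d dvd n} = insert n {d. d dvd n \<and> d < n}"
    using less.prems by (auto dest: dvd_imp_le)
  have IH: "(\<Sum>d\<in>{d. d dvd n \<and> d < n}. Fm m d) = (\<Sum>d\<in>{d. d dvd n \<and> d < n}. G d)"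
    using less.prems by (intro sum.cong refl less.IH) (auto intro: Nat.gr0I)
  have "fm m n = G n + (\<Sum>d\<in>{d. d dvd n \<and> d < n}. G d)"
    using assms[OF less.prems] unfolding eq using fin by (subst (asm) sum.insert) auto
  moreover have "Fm m n = fm m n - (\<Sum>d\<in>{d. d dvd n \<and> d < n}. Fm m d)"
    using less.prems by (subst Fm.simps) simp
  ultimately show ?case using IH by simp
qed


theorem lemma1:
  fixes m n :: nat
  assumes "m \<ge> 1" and "n \<ge> 1"
  shows "Fm m n = (\<Prod>p\<in>prime_factors n.
                     fm (m - 1) (multiplicity p n) - fm (m - 1) (multiplicity p n - 1))
         \<and> \<bar>Fm m n\<bar> \<le> 1
         \<and> (Fm m n \<noteq> 0 \<longrightarrow>
              (\<forall>p. prime p \<and> p dvd n \<longrightarrow> multiplicity p n \<ge> tetr 2 m))"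
proof -
  define g where "g = fm (m - 1)"
  have g0: "g 0 = 1" by (simp add: g_def fm_def)
  define G :: "nat \<Rightarrow> int" where "G d = (\<Prod>p\<in>prime_factors d. g (multiplicity p d) - g (multiplicity p d - 1))" for d
  have n0: "n > 0" using assms by simp
  have sumG: "(\<Sum>d | d dvd k. G d) = fm m k" if "k > 0" for k :: nat
    unfolding G_def using G_sum[of k g, OF that g0] fm_prod[OF assms(1) that] by (simp add: g_def)
  have eqF: "Fm m n = G n" by (rule Fm_unique[OF sumG n0])
  have p1: "Fm m n = (\<Prod>p\<in>prime_factors n.
                     fm (m - 1) (multiplicity p n) - fm (m - 1) (multiplicity p n - 1))"
    using eqF by (simp add: G_def g_def)
  have gab: "\<bar>g a - g b\<bar> \<le> 1" for a b by (simp add: g_def fm_def)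
  have p2: "\<bar>Fm m n\<bar> \<le> 1"
    unfolding eqF G_def abs_prod by (rule prod_le_1) (auto simp: gab)
  have p3: "multiplicity p n \<ge> tetr 2 m" if nz: "Fm m n \<noteq> 0" and p: "prime p" "p dvd n" for p
  proof (rule ccontr)
    assume "\<not> multiplicity p n \<ge> tetr 2 m"
    hence lt: "multiplicity p n < tetr 2 (Suc (m - 1))" using assms(1) by simp
    have pin: "p \<in> prime_factors n" using p n0 by (simp add: in_prime_factors_iff)
    have m1: "multiplicity p n \<ge> 1" using pin n0 by (simp add: prime_factors_multiplicity)
    have a: "g (multiplicity p n) = 1"
      using H_small[OF m1 lt] m1 by (simp add: g_def fm_def)
    have b: "g (multiplicity p n - 1) = 1"
    proof (cases "multiplicity p n - 1 = 0")
      case True then show ?thesis using g0 by simp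
    next
      case False
      then have "H (multiplicity p n - 1) \<le> m - 1" using lt by (intro H_small) auto
      then show ?thesis using False by (simp add: g_def fm_def)
    qed
    have "G n = 0" unfolding G_def using pin a b by (intro prod_zero) (auto intro!: bexI[of _ p])
    thus False using nz eqF by simp
  qed
  show ?thesis using p1 p2 p3 by blast
qed

end
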